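(* Let $L=L_1\oplus L_2$ be a finite-dimensional Lie algebra which is the direct sum of ideals $L_1,L_2$. Then: (i) if there exist Lie algebras $H_1,H_2$ with $H_1^2\cong L_1$ and $H_2^2\cong L_2$, then there is a Lie algebra $H$ with $H^2\cong L$; (ii) if there is a Lie algebra $H$ with $H^2\cong L$ and $Z(L_1)=0$, then there is a Lie algebra $K$ with $K^2\cong L_1$.
   Context: $H^2=[H,H]$ denotes the derived algebra; $Z(L_1)$ is the centre of $L_1$. *)

theory Defs
  imports Complex_Main "HOL-Library.Function_Algebras"
begin

definition lie_algebra ::
  "('k::field \<Rightarrow> 'v::ab_group_add \<Rightarrow> 'v) \<Rightarrow> 'v set \<Rightarrow> ('v \<Rightarrow> 'v \<Rightarrow> 'v) \<Rightarrow> bool" where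
  "lie_algebra sc V br \<longleftrightarrow>
     vector_space sc \<and> module.subspace sc V \<and>
     (\<forall>x\<in>V. \<forall>y\<in>V. br x y \<in> V) \<and>
     (\<forall>x\<in>V. \<forall>y\<in>V. \<forall>z\<in>V. br (x + y) z = br x z + br y z \<and> br x (y + z) = br x y + br x z) \<and>
     (\<forall>c. \<forall>x\<in>V. \<forall>y\<in>V. br (sc c x) y = sc c (br x y) \<and> br x (sc c y) = sc c (br x y)) \<and>
     (\<forall>x\<in>V. br x x = 0) \<and>
     (\<forall>x\<in>V. \<forall>y\<in>V. \<forall>z\<in>V. br x (br y z) + br y (br z x) + br z (br x y) = 0)"

definition fd_lie_algebra ::
  "('k::field \<Rightarrow> 'v::ab_group_add \<Rightarrow> 'v) \<Rightarrow> 'v set \<Rightarrow> ('v \<Rightarrow> 'v \<Rightarrow> 'v) \<Rightarrow> bool" where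
  "fd_lie_algebra sc V br \<longleftrightarrow>
     lie_algebra sc V br \<and> (\<exists>B. finite B \<and> B \<subseteq> V \<and> module.span sc B = V)"

definition derived ::
  "('k::field \<Rightarrow> 'v::ab_group_add \<Rightarrow> 'v) \<Rightarrow> 'v set \<Rightarrow> ('v \<Rightarrow> 'v \<Rightarrow> 'v) \<Rightarrow> 'v set" where
  "derived sc V br = module.span sc {br x y | x y. x \<in> V \<and> y \<in> V}"

definition lie_iso ::
  "('k::field \<Rightarrow> 'a::ab_group_add \<Rightarrow> 'a) \<Rightarrow> 'a set \<Rightarrow> ('a \<Rightarrow> 'a \<Rightarrow> 'a) \<Rightarrow>
   ('k \<Rightarrow> 'b::ab_group_add \<Rightarrow> 'b) \<Rightarrow> 'b set \<Rightarrow> ('b \<Rightarrow> 'b \<Rightarrow> 'b) \<Rightarrow> bool" where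
  "lie_iso sc1 V1 br1 sc2 V2 br2 \<longleftrightarrow>
     (\<exists>f. bij_betw f V1 V2 \<and>
          (\<forall>x\<in>V1. \<forall>y\<in>V1. f (x + y) = f x + f y \<and> f (br1 x y) = br2 (f x) (f y)) \<and>
          (\<forall>c. \<forall>x\<in>V1. f (sc1 c x) = sc2 c (f x)))"

definition lie_ideal ::
  "('k::field \<Rightarrow> 'v::ab_group_add \<Rightarrow> 'v) \<Rightarrow> 'v set \<Rightarrow> ('v \<Rightarrow> 'v \<Rightarrow> 'v) \<Rightarrow> 'v set \<Rightarrow> bool" where
  "lie_ideal sc V br I \<longleftrightarrow>
     module.subspace sc I \<and> I \<subseteq> V \<and> (\<forall>x\<in>V. \<forall>y\<in>I. br x y \<in> I)"

definition lie_center :: "'v::ab_group_add set \<Rightarrow> ('v \<Rightarrow> 'v \<Rightarrow> 'v) \<Rightarrow> 'v set" where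
  "lie_center V br = {z \<in> V. \<forall>x\<in>V. br z x = 0}"

text \<open>Universe for the Lie algebras asserted to exist: subspaces of k^(nat)
 (functions nat => 'k with pointwise operations). Every finite-dimensional
 Lie algebra over 'k is isomorphic to one of these.\<close>
definition seq_scale :: "'k::field \<Rightarrow> (nat \<Rightarrow> 'k) \<Rightarrow> (nat \<Rightarrow> 'k)" where
  "seq_scale c f = (\<lambda>i. c * f i)"

end

theory Submission
  imports Defs "HOL-Library.Product_Plus"
begin


lemma lie_vs: "lie_algebra sc V br \<Longrightarrow> vector_space sc"
  by (simp add: lie_algebra_def)

lemma lie_mod: "lie_algebra sc V br \<Longrightarrow> module sc"
  by (simp add: lie_algebra_def module_iff_vector_space)

lemma span_image_lin:
  assumes m1: "module s1" and m2: "module s2" and sub: "module.subspace s1 V" and SV: "S \<subseteq> V"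
    and add: "\<forall>x\<in>V. \<forall>y\<in>V. f (x+y) = f x + f y" and scl: "\<forall>c. \<forall>x\<in>V. f (s1 c x) = s2 c (f x)"
  shows "module.span s2 (f ` S) = f ` module.span s1 S"
proof
  have spV: "module.span s1 S \<subseteq> V" using module.span_minimal[OF m1 SV sub] .
  have z: "0 \<in> V" using sub m1 by (simp add: module.subspace_def)
  have f0: "f 0 = 0" using add z by (metis add.right_neutral add_left_cancel)
  show "module.span s2 (f`S) \<subseteq> f ` module.span s1 S"
  proof (rule module.span_minimal[OF m2])
    show "f ` S \<subseteq> f ` module.span s1 S" using module.span_base[OF m1] by blast
    show "module.subspace s2 (f ` module.span s1 S)"
      unfolding module.subspace_def[OF m2]
    proof (intro conjI ballI allI)
      show "0 \<in> f ` module.span s1 S" using f0 module.span_zero[OF m1] by (metis image_eqI)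
    next
      fix x y assume "x \<in> f ` module.span s1 S" "y \<in> f ` module.span s1 S"
      then obtain a b where ab: "a \<in> module.span s1 S" "b \<in> module.span s1 S" "x = f a" "y = f b" by blast
      then have "x + y = f (a + b)" using add spV by (metis subsetD)
      then show "x + y \<in> f ` module.span s1 S" using module.span_add[OF m1 ab(1,2)] by blast
    next
      fix c x assume "x \<in> f ` module.span s1 S"
      then obtain a where ab: "a \<in> module.span s1 S" "x = f a" by blast
      then have "s2 c x = f (s1 c a)" using scl spV by (metis subsetD)
      then show "s2 c x \<in> f ` module.span s1 S" using module.span_scale[OF m1 ab(1)] by blast
    qed
  qed
  show "f ` module.span s1 S \<subseteq> module.span s2 (f`S)"
  proof
    fix y assume "y \<in> f ` module.span s1 S"
    then obtain x where x: "x \<in> module.span s1 S" "y = f x" by blast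
    have "x \<in> module.span s1 S \<and> f x \<in> module.span s2 (f`S)"
    proof (rule module.span_induct[OF m1 x(1)])
      show "module.subspace s1 {x. x \<in> module.span s1 S \<and> f x \<in> module.span s2 (f`S)}"
        unfolding module.subspace_def[OF m1]
      proof (intro conjI ballI allI)
        show "0 \<in> {x. x \<in> module.span s1 S \<and> f x \<in> module.span s2 (f`S)}"
          using f0 module.span_zero[OF m1] module.span_zero[OF m2] by auto
      next
        fix a b assume "a \<in> {x. x \<in> module.span s1 S \<and> f x \<in> module.span s2 (f`S)}"
          "b \<in> {x. x \<in> module.span s1 S \<and> f x \<in> module.span s2 (f`S)}"
        then have A: "a \<in> module.span s1 S" "f a \<in> module.span s2 (f`S)"
          "b \<in> module.span s1 S" "f b \<in> module.span s2 (f`S)" by auto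
        have "f (a+b) = f a + f b" using add spV A by (metis subsetD)
        then show "a + b \<in> {x. x \<in> module.span s1 S \<and> f x \<in> module.span s2 (f`S)}"
          using A module.span_add[OF m1] module.span_add[OF m2] by auto
      next
        fix c a assume "a \<in> {x. x \<in> module.span s1 S \<and> f x \<in> module.span s2 (f`S)}"
        then have A: "a \<in> module.span s1 S" "f a \<in> module.span s2 (f`S)" by auto
        have "f (s1 c a) = s2 c (f a)" using scl spV A by (metis subsetD)
        then show "s1 c a \<in> {x. x \<in> module.span s1 S \<and> f x \<in> module.span s2 (f`S)}"
          using A module.span_scale[OF m1] module.span_scale[OF m2] by auto
      qed
    next
      fix a assume "a \<in> S"
      then show "a \<in> module.span s1 S \<and> f a \<in> module.span s2 (f`S)"
        using module.span_base[OF m1] module.span_base[OF m2] by auto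
    qed
    then show "y \<in> module.span s2 (f`S)" using x by auto
  qed
qed

lemma hom_image:
  assumes L: "fd_lie_algebra sc V br" and vs: "vector_space sc'"
    and add: "\<forall>x\<in>V. \<forall>y\<in>V. f (x+y) = f x + f y" and scl: "\<forall>c. \<forall>x\<in>V. f (sc c x) = sc' c (f x)"
    and hb: "\<forall>x\<in>V. \<forall>y\<in>V. f (br x y) = br' (f x) (f y)"
  shows "fd_lie_algebra sc' (f`V) br' \<and> derived sc' (f`V) br' = f ` derived sc V br"
proof -
  have la: "lie_algebra sc V br" using L by (simp add: fd_lie_algebra_def)
  have m1: "module sc" using la by (rule lie_mod)
  have m2: "module sc'" using vs by (simp add: module_iff_vector_space)
  have sub: "module.subspace sc V" using la by (simp add: lie_algebra_def)
  have cl: "x + y \<in> V" "sc c x \<in> V" "br x y \<in> V" if "x \<in> V" "y \<in> V" for x y c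
    using that sub la m1 by (auto simp: lie_algebra_def module.subspace_def)
  have z: "0 \<in> V" using sub m1 by (simp add: module.subspace_def)
  have spV: "module.span sc V = V" using module.span_eq_iff[OF m1] sub by simp
  have sub2: "module.subspace sc' (f`V)"
    using span_image_lin[OF m1 m2 sub subset_refl add scl] spV module.subspace_span[OF m2] by metis
  have bil: "br (x+y) z = br x z + br y z" "br x (y+z) = br x y + br x z"
     "br (sc c x) y = sc c (br x y)" "br x (sc c y) = sc c (br x y)" "br x x = 0"
     "br x (br y z) + br y (br z x) + br z (br x y) = 0"
    if "x \<in> V" "y \<in> V" "z \<in> V" for x y z c
    using la that unfolding lie_algebra_def by blast+
  have f0: "f 0 = 0" using add z by (metis add.right_neutral add_left_cancel)
  have c1: "\<forall>u\<in>f`V. \<forall>v\<in>f`V. br' u v \<in> f`V"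
  proof (intro ballI)
    fix u v assume "u \<in> f`V" "v \<in> f`V"
    then obtain x y where "x \<in> V" "y \<in> V" "u = f x" "v = f y" by blast
    then show "br' u v \<in> f ` V" using hb cl by (metis image_eqI)
  qed
  have c2: "\<forall>u\<in>f`V. \<forall>v\<in>f`V. \<forall>w\<in>f`V. br' (u + v) w = br' u w + br' v w \<and> br' u (v + w) = br' u v + br' u w"
  proof (intro ballI)
    fix u v w assume "u \<in> f`V" "v \<in> f`V" "w \<in> f`V"
    then obtain x y z where xyz: "x \<in> V" "y \<in> V" "z \<in> V" "u = f x" "v = f y" "w = f z" by blast
    have "br' (u + v) w = br' (f (x+y)) (f z)" using xyz add by simp
    also have "\<dots> = f (br (x+y) z)" using hb xyz cl by simp
    also have "\<dots> = f (br x z + br y z)" using bil xyz by simp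
    also have "\<dots> = f (br x z) + f (br y z)" using add xyz cl by simp
    also have "\<dots> = br' u w + br' v w" using hb xyz by simp
    finally have A: "br' (u + v) w = br' u w + br' v w" .
    have "br' u (v + w) = br' (f x) (f (y+z))" using xyz add by simp
    also have "\<dots> = f (br x (y+z))" using hb xyz cl by simp
    also have "\<dots> = f (br x y + br x z)" using bil xyz by simp
    also have "\<dots> = f (br x y) + f (br x z)" using add xyz cl by simp
    also have "\<dots> = br' u v + br' u w" using hb xyz by simp
    finally show "br' (u + v) w = br' u w + br' v w \<and> br' u (v + w) = br' u v + br' u w" using A by simp
  qed
  have c3: "\<forall>u\<in>f`V. \<forall>v\<in>f`V. \<forall>w\<in>f`V. br' u (br' v w) + br' v (br' w u) + br' w (br' u v) = 0"
  proof (intro ballI)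
    fix u v w assume "u \<in> f`V" "v \<in> f`V" "w \<in> f`V"
    then obtain x y z where xyz: "x \<in> V" "y \<in> V" "z \<in> V" "u = f x" "v = f y" "w = f z" by blast
    have "br' u (br' v w) + br' v (br' w u) + br' w (br' u v)
          = f (br x (br y z) + br y (br z x) + br z (br x y))"
      using xyz add hb cl by simp
    also have "\<dots> = f 0" using bil xyz by simp
    finally show "br' u (br' v w) + br' v (br' w u) + br' w (br' u v) = 0" using f0 by simp
  qed
  have c4: "\<forall>c. \<forall>u\<in>f`V. \<forall>v\<in>f`V. br' (sc' c u) v = sc' c (br' u v) \<and> br' u (sc' c v) = sc' c (br' u v)"
  proof (intro allI ballI)
    fix c u v assume "u \<in> f`V" "v \<in> f`V"
    then obtain x y where xy: "x \<in> V" "y \<in> V" "u = f x" "v = f y" by blast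
    have "br' (sc' c u) v = br' (f (sc c x)) (f y)" using xy scl by simp
    also have "\<dots> = f (br (sc c x) y)" using hb xy cl by simp
    also have "\<dots> = f (sc c (br x y))" using bil xy by simp
    also have "\<dots> = sc' c (br' u v)" using scl hb xy cl by simp
    finally have A: "br' (sc' c u) v = sc' c (br' u v)" .
    have "br' u (sc' c v) = br' (f x) (f (sc c y))" using xy scl by simp
    also have "\<dots> = f (br x (sc c y))" using hb xy cl by simp
    also have "\<dots> = f (sc c (br x y))" using bil xy by simp
    also have "\<dots> = sc' c (br' u v)" using scl hb xy cl by simp
    finally show "br' (sc' c u) v = sc' c (br' u v) \<and> br' u (sc' c v) = sc' c (br' u v)" using A by simp
  qed
  have c5: "\<forall>u\<in>f`V. br' u u = 0"
  proof
    fix u assume "u \<in> f`V"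
    then obtain x where x: "x \<in> V" "u = f x" by blast
    have "br' u u = f (br x x)" using x hb by simp
    also have "\<dots> = f 0" using bil x by simp
    finally show "br' u u = 0" using f0 by simp
  qed
  have la2: "lie_algebra sc' (f`V) br'"
    unfolding lie_algebra_def using vs sub2 c1 c2 c3 c4 c5 by blast
  obtain B where B: "finite B" "B \<subseteq> V" "module.span sc B = V" using L by (auto simp: fd_lie_algebra_def)
  have "module.span sc' (f`B) = f ` V"
    using span_image_lin[OF m1 m2 sub B(2) add scl] B(3) by simp
  then have fd: "fd_lie_algebra sc' (f`V) br'"
    unfolding fd_lie_algebra_def using la2 B by blast
  have brs: "{br' u v | u v. u \<in> f`V \<and> v \<in> f`V} = f ` {br x y | x y. x \<in> V \<and> y \<in> V}"
  proof (rule set_eqI)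
    fix w show "w \<in> {br' u v | u v. u \<in> f`V \<and> v \<in> f`V} \<longleftrightarrow> w \<in> f ` {br x y | x y. x \<in> V \<and> y \<in> V}"
    proof
      assume "w \<in> {br' u v | u v. u \<in> f`V \<and> v \<in> f`V}"
      then obtain x y where xy: "x \<in> V" "y \<in> V" "w = br' (f x) (f y)" by blast
      then have "w = f (br x y)" using hb by simp
      then show "w \<in> f ` {br x y | x y. x \<in> V \<and> y \<in> V}" using xy by blast
    next
      assume "w \<in> f ` {br x y | x y. x \<in> V \<and> y \<in> V}"
      then obtain x y where xy: "x \<in> V" "y \<in> V" "w = f (br x y)" by blast
      then have "w = br' (f x) (f y)" using hb by simp
      then show "w \<in> {br' u v | u v. u \<in> f`V \<and> v \<in> f`V}" using xy by blast
    qed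
  qed
  have "derived sc' (f`V) br' = f ` derived sc V br"
    unfolding derived_def brs
    by (rule span_image_lin[OF m1 m2 sub _ add scl]) (use cl in auto)
  with fd show ?thesis by blast
qed


lemma inv_hom:
  assumes bij: "bij_betw f V1 V2"
    and hom: "\<forall>x\<in>V1. \<forall>y\<in>V1. f (x+y) = f x + f y \<and> f (b1 x y) = b2 (f x) (f y)"
      "\<forall>c. \<forall>x\<in>V1. f (s1 c x) = s2 c (f x)"
    and cl: "\<forall>x\<in>V1. \<forall>y\<in>V1. x+y \<in> V1 \<and> b1 x y \<in> V1" "\<forall>c. \<forall>x\<in>V1. s1 c x \<in> V1"
  shows "lie_iso s2 V2 b2 s1 V1 b1"
proof -
  let ?g = "inv_into V1 f"
  have bg: "bij_betw ?g V2 V1" by (rule bij_betw_inv_into[OF bij])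
  have gf: "?g (f x) = x" if "x \<in> V1" for x using bij that by (simp add: bij_betw_inv_into_left)
  have fg: "f (?g y) = y" "?g y \<in> V1" if "y \<in> V2" for y
    using bij that bg by (auto simp: bij_betw_inv_into_right bij_betw_apply)
  show ?thesis unfolding lie_iso_def
  proof (intro exI[of _ ?g] conjI bg ballI allI)
    fix u v assume uv: "u \<in> V2" "v \<in> V2"
    have "u + v = f (?g u + ?g v)" using hom fg uv by simp
    then show "?g (u + v) = ?g u + ?g v" using gf cl fg uv by simp
    have "b2 u v = f (b1 (?g u) (?g v))" using hom fg uv by simp
    then show "?g (b2 u v) = b1 (?g u) (?g v)" using gf cl fg uv by simp
  next
    fix c u assume u: "u \<in> V2"
    have "s2 c u = f (s1 c (?g u))" using hom fg u by simp
    then show "?g (s2 c u) = s1 c (?g u)" using gf cl fg u by simp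
  qed
qed

lemma iso_trans:
  assumes "lie_iso s1 V1 b1 s2 V2 b2" "lie_iso s2 V2 b2 s3 V3 b3"
  shows "lie_iso s1 V1 b1 s3 V3 b3"
proof -
  obtain f where f: "bij_betw f V1 V2"
    "\<forall>x\<in>V1. \<forall>y\<in>V1. f (x + y) = f x + f y \<and> f (b1 x y) = b2 (f x) (f y)"
    "\<forall>c. \<forall>x\<in>V1. f (s1 c x) = s2 c (f x)" using assms(1) unfolding lie_iso_def by blast
  obtain g where g: "bij_betw g V2 V3"
    "\<forall>x\<in>V2. \<forall>y\<in>V2. g (x + y) = g x + g y \<and> g (b2 x y) = b3 (g x) (g y)"
    "\<forall>c. \<forall>x\<in>V2. g (s2 c x) = s3 c (g x)" using assms(2) unfolding lie_iso_def by blast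
  have fi: "f x \<in> V2" if "x \<in> V1" for x using f(1) that by (simp add: bij_betw_apply)
  show ?thesis unfolding lie_iso_def
    by (intro exI[of _ "g \<circ> f"] conjI bij_betw_trans[OF f(1) g(1)]) (simp_all add: f g fi)
qed

lemma derived_closed:
  assumes la: "lie_algebra sc V br"
  shows "derived sc V br \<subseteq> V"
    "\<forall>x\<in>derived sc V br. \<forall>y\<in>derived sc V br. x+y \<in> derived sc V br \<and> br x y \<in> derived sc V br"
    "\<forall>c. \<forall>x\<in>derived sc V br. sc c x \<in> derived sc V br"
    "module.subspace sc (derived sc V br)"
proof -
  have m: "module sc" using la by (rule lie_mod)
  have sub: "module.subspace sc V" using la by (simp add: lie_algebra_def)
  have S: "{br x y | x y. x \<in> V \<and> y \<in> V} \<subseteq> V" using la by (auto simp: lie_algebra_def)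
  show D: "derived sc V br \<subseteq> V" unfolding derived_def by (rule module.span_minimal[OF m S sub])
  show "\<forall>x\<in>derived sc V br. \<forall>y\<in>derived sc V br. x+y \<in> derived sc V br \<and> br x y \<in> derived sc V br"
  proof (intro ballI conjI)
    fix x y assume xy: "x \<in> derived sc V br" "y \<in> derived sc V br"
    show "x + y \<in> derived sc V br" using xy module.span_add[OF m] unfolding derived_def by simp
    have "x \<in> V" "y \<in> V" using xy D by auto
    then have "br x y \<in> {br x y | x y. x \<in> V \<and> y \<in> V}" by blast
    then show "br x y \<in> derived sc V br" using module.span_base[OF m] unfolding derived_def by simp
  qed
  show "\<forall>c. \<forall>x\<in>derived sc V br. sc c x \<in> derived sc V br"
    using module.span_scale[OF m] unfolding derived_def by simp
  show "module.subspace sc (derived sc V br)"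
    unfolding derived_def by (rule module.subspace_span[OF m])
qed

lemma vs_seq: "vector_space (seq_scale :: 'k::field \<Rightarrow> _)"
  by unfold_locales (auto simp: seq_scale_def fun_eq_iff algebra_simps)

lemma embed:
  fixes sc :: "'k::field \<Rightarrow> 'v::ab_group_add \<Rightarrow> 'v"
  assumes L: "fd_lie_algebra sc V br"
  shows "\<exists>(H::(nat\<Rightarrow>'k) set) brH. fd_lie_algebra seq_scale H brH \<and>
           lie_iso seq_scale (derived seq_scale H brH) brH sc (derived sc V br) br"
proof -
  have la: "lie_algebra sc V br" using L by (simp add: fd_lie_algebra_def)
  have vs: "vector_space sc" using la by (rule lie_vs)
  interpret v: vector_space sc by (rule vs)
  obtain B0 where B0: "finite B0" "B0 \<subseteq> V" "v.span B0 = V" using L by (auto simp: fd_lie_algebra_def)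
  obtain B where B: "B \<subseteq> B0" "v.independent B" "B0 \<subseteq> v.span B"
    using v.maximal_independent_subset[of B0] by blast
  have spB: "v.span B = V"
  proof
    show "v.span B \<subseteq> V" using v.span_mono[OF B(1)] B0(3) by simp
    show "V \<subseteq> v.span B" using v.span_minimal[OF B(3) v.subspace_span] B0(3) by simp
  qed
  have finB: "finite B" using B(1) B0(1) finite_subset by blast
  define n where "n = card B"
  obtain e where e: "bij_betw e {0..<n} B" using ex_bij_betw_nat_finite[OF finB] n_def by blast
  define g where "g x = (\<lambda>i. if i < n then v.representation B x (e i) else 0)" for x
  have gadd: "g (x + y) = g x + g y" if "x \<in> V" "y \<in> V" for x y
    using that spB by (auto simp: g_def fun_eq_iff v.representation_add[OF B(2)])
  have gscl: "g (sc c x) = seq_scale c (g x)" if "x \<in> V" for x c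
    using that spB by (auto simp: g_def fun_eq_iff seq_scale_def v.representation_scale[OF B(2)])
  have inj: "inj_on g V"
  proof (rule inj_onI)
    fix x y assume xy: "x \<in> V" "y \<in> V" "g x = g y"
    have "v.representation B x b = v.representation B y b" for b
    proof (cases "b \<in> B")
      case True
      have "b \<in> e ` {0..<n}" using e True by (simp add: bij_betw_def)
      then obtain i where i: "i \<in> {0..<n}" "b = e i" by blast
      then show ?thesis using fun_cong[OF xy(3), of i] by (simp add: g_def)
    next
      case False
      then have "v.representation B x b = 0" "v.representation B y b = 0"
        using v.representation_ne_zero[of B x b] v.representation_ne_zero[of B y b] by blast+
      then show ?thesis by simp
    qed
    then have eq: "v.representation B x = v.representation B y" by (rule ext)
    have "x = (\<Sum>b | v.representation B x b \<noteq> 0. sc (v.representation B x b) b)"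
      using v.sum_nonzero_representation_eq[OF B(2), of x] xy(1) spB by simp
    also have "\<dots> = (\<Sum>b | v.representation B y b \<noteq> 0. sc (v.representation B y b) b)"
      by (simp only: eq)
    also have "\<dots> = y"
      using v.sum_nonzero_representation_eq[OF B(2), of y] xy(2) spB by simp
    finally show "x = y" .
  qed
  define brH where "brH u w = g (br (inv_into V g u) (inv_into V g w))" for u w
  have hb: "\<forall>x\<in>V. \<forall>y\<in>V. g (br x y) = brH (g x) (g y)"
    using inj by (simp add: brH_def inv_into_f_f)
  have HI: "fd_lie_algebra seq_scale (g`V) brH \<and> derived seq_scale (g`V) brH = g ` derived sc V br"
  proof -
    have ga: "\<forall>x\<in>V. \<forall>y\<in>V. g (x+y) = g x + g y" using gadd by blast
    have gs: "\<forall>c. \<forall>x\<in>V. g (sc c x) = seq_scale c (g x)" using gscl by blast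
    show ?thesis by (rule hom_image[OF L vs_seq ga gs hb])
  qed
  note Dc = derived_closed[OF la]
  have bj: "bij_betw g (derived sc V br) (g ` derived sc V br)"
    using inj_on_subset[OF inj Dc(1)] by (simp add: inj_on_imp_bij_betw)
  have h1: "\<forall>x\<in>derived sc V br. \<forall>y\<in>derived sc V br. g (x + y) = g x + g y \<and> g (br x y) = brH (g x) (g y)"
  proof (intro ballI)
    fix x y assume "x \<in> derived sc V br" "y \<in> derived sc V br"
    then have xy: "x \<in> V" "y \<in> V" using Dc(1) by (meson subsetD)+
    show "g (x + y) = g x + g y \<and> g (br x y) = brH (g x) (g y)"
      using gadd[OF xy] hb xy by simp
  qed
  have h2: "\<forall>c. \<forall>x\<in>derived sc V br. g (sc c x) = seq_scale c (g x)"
  proof (intro ballI allI)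
    fix c x assume "x \<in> derived sc V br"
    then have xy: "x \<in> V" using Dc(1) by (meson subsetD)
    show "g (sc c x) = seq_scale c (g x)" using gscl[OF xy] by simp
  qed
  have "lie_iso seq_scale (g ` derived sc V br) brH sc (derived sc V br) br"
    by (rule inv_hom[OF bj h1 h2 Dc(2) Dc(3)])
  then have "lie_iso seq_scale (derived seq_scale (g`V) brH) brH sc (derived sc V br) br"
    using HI by simp
  then show ?thesis using HI by blast
qed



locale lie =
  fixes sc :: "'k::field \<Rightarrow> 'v::ab_group_add \<Rightarrow> 'v" and V :: "'v set" and br :: "'v \<Rightarrow> 'v \<Rightarrow> 'v"
  assumes la: "lie_algebra sc V br"
begin

lemma m: "module sc" using la by (rule lie_mod)
lemma vs: "vector_space sc" using la by (rule lie_vs)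
lemma sub: "module.subspace sc V" using la by (simp add: lie_algebra_def)

lemma zero_in: "0 \<in> V" using sub m by (simp add: module.subspace_def)
lemma add_cl: "x \<in> V \<Longrightarrow> y \<in> V \<Longrightarrow> x + y \<in> V" using sub m by (simp add: module.subspace_def)
lemma scale_cl: "x \<in> V \<Longrightarrow> sc c x \<in> V" using sub m by (simp add: module.subspace_def)
lemma br_cl: "x \<in> V \<Longrightarrow> y \<in> V \<Longrightarrow> br x y \<in> V" using la by (simp add: lie_algebra_def)
lemma neg_cl: "x \<in> V \<Longrightarrow> - x \<in> V" using module.subspace_neg[OF m sub] by blast
lemma diff_cl: "x \<in> V \<Longrightarrow> y \<in> V \<Longrightarrow> x - y \<in> V" using module.subspace_diff[OF m sub] by blast

lemma br_addL: "x \<in> V \<Longrightarrow> y \<in> V \<Longrightarrow> z \<in> V \<Longrightarrow> br (x + y) z = br x z + br y z"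
  using la unfolding lie_algebra_def by blast
lemma br_addR: "x \<in> V \<Longrightarrow> y \<in> V \<Longrightarrow> z \<in> V \<Longrightarrow> br x (y + z) = br x y + br x z"
  using la unfolding lie_algebra_def by blast
lemma br_scL: "x \<in> V \<Longrightarrow> y \<in> V \<Longrightarrow> br (sc c x) y = sc c (br x y)"
  using la unfolding lie_algebra_def by blast
lemma br_scR: "x \<in> V \<Longrightarrow> y \<in> V \<Longrightarrow> br x (sc c y) = sc c (br x y)"
  using la unfolding lie_algebra_def by blast
lemma br_alt: "x \<in> V \<Longrightarrow> br x x = 0"
  using la unfolding lie_algebra_def by blast
lemma jacobi: "x \<in> V \<Longrightarrow> y \<in> V \<Longrightarrow> z \<in> V \<Longrightarrow> br x (br y z) + br y (br z x) + br z (br x y) = 0"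
  using la unfolding lie_algebra_def by blast

lemma br_0L: "x \<in> V \<Longrightarrow> br 0 x = 0"
  using br_addL[OF zero_in zero_in, of x] by simp
lemma br_0R: "x \<in> V \<Longrightarrow> br x 0 = 0"
  using br_addR[OF _ zero_in zero_in, of x] by simp
lemma br_negL: "x \<in> V \<Longrightarrow> y \<in> V \<Longrightarrow> br (- x) y = - br x y"
  using br_addL[of x "-x" y] neg_cl br_0L by (simp add: eq_neg_iff_add_eq_0 add.commute)
lemma br_negR: "x \<in> V \<Longrightarrow> y \<in> V \<Longrightarrow> br x (- y) = - br x y"
  using br_addR[of x y "-y"] neg_cl br_0R by (simp add: eq_neg_iff_add_eq_0 add.commute)
lemma br_diffL: "x \<in> V \<Longrightarrow> y \<in> V \<Longrightarrow> z \<in> V \<Longrightarrow> br (x - y) z = br x z - br y z"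
  using br_addL[of x "-y" z] neg_cl br_negL by simp
lemma br_diffR: "x \<in> V \<Longrightarrow> y \<in> V \<Longrightarrow> z \<in> V \<Longrightarrow> br x (y - z) = br x y - br x z"
  using br_addR[of x y "-z"] neg_cl br_negR by simp
lemma antisym: "x \<in> V \<Longrightarrow> y \<in> V \<Longrightarrow> br x y = - br y x"
proof -
  assume xy: "x \<in> V" "y \<in> V"
  have "0 = br (x + y) (x + y)" using br_alt add_cl xy by simp
  also have "\<dots> = br x (x + y) + br y (x + y)"
    using br_addL[OF xy add_cl[OF xy]] .
  also have "\<dots> = br x x + br x y + (br y x + br y y)"
    using br_addR[OF xy(1) xy] br_addR[OF xy(2) xy] by simp
  also have "\<dots> = br x y + br y x" using br_alt xy by simp
  finally show ?thesis by (simp add: eq_neg_iff_add_eq_0)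
qed
lemma jac2: "x \<in> V \<Longrightarrow> y \<in> V \<Longrightarrow> z \<in> V \<Longrightarrow> br x (br y z) = br (br x y) z + br y (br x z)"
proof -
  assume xyz: "x \<in> V" "y \<in> V" "z \<in> V"
  have "br z x = - br x z" using antisym[of z x] xyz by simp
  then have "br y (br z x) = - br y (br x z)" using br_negR[of y "br x z"] br_cl xyz by simp
  moreover have "br z (br x y) = - br (br x y) z" using antisym[of z "br x y"] br_cl xyz by simp
  ultimately have "br x (br y z) - br y (br x z) - br (br x y) z = 0" using jacobi[OF xyz] by simp
  then show ?thesis by (simp add: algebra_simps)
qed

end



definition pscale :: "('k \<Rightarrow> 'a \<Rightarrow> 'a) \<Rightarrow> ('k \<Rightarrow> 'b \<Rightarrow> 'b) \<Rightarrow> 'k \<Rightarrow> 'a \<times> 'b \<Rightarrow> 'a \<times> 'b"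
  where "pscale s1 s2 c p = (s1 c (fst p), s2 c (snd p))"
definition pbr :: "('a \<Rightarrow> 'a \<Rightarrow> 'a) \<Rightarrow> ('b \<Rightarrow> 'b \<Rightarrow> 'b) \<Rightarrow> 'a \<times> 'b \<Rightarrow> 'a \<times> 'b \<Rightarrow> 'a \<times> 'b"
  where "pbr b1 b2 p q = (b1 (fst p) (fst q), b2 (snd p) (snd q))"

lemma vs_prod:
  assumes "vector_space s1" "vector_space s2"
  shows "vector_space (pscale s1 s2)"
proof -
  interpret a: vector_space s1 by fact
  interpret b: vector_space s2 by fact
  show ?thesis
    by unfold_locales (auto simp: pscale_def prod_eq_iff a.scale_right_distrib a.scale_left_distrib
        b.scale_right_distrib b.scale_left_distrib)
qed

lemma prod_lie:
  fixes s1 :: "'k::field \<Rightarrow> 'a::ab_group_add \<Rightarrow> 'a" and s2 :: "'k \<Rightarrow> 'b::ab_group_add \<Rightarrow> 'b"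
  assumes A: "fd_lie_algebra s1 H1 b1" and B: "fd_lie_algebra s2 H2 b2"
  shows "fd_lie_algebra (pscale s1 s2) (H1 \<times> H2) (pbr b1 b2) \<and>
         derived (pscale s1 s2) (H1 \<times> H2) (pbr b1 b2) = derived s1 H1 b1 \<times> derived s2 H2 b2"
proof -
  interpret l1: lie s1 H1 b1 using A by (unfold_locales) (simp add: fd_lie_algebra_def)
  interpret l2: lie s2 H2 b2 using B by (unfold_locales) (simp add: fd_lie_algebra_def)
  interpret m1: module s1 by (rule l1.m)
  interpret m2: module s2 by (rule l2.m)
  have vsp: "vector_space (pscale s1 s2)" by (rule vs_prod[OF l1.vs l2.vs])
  have mp: "module (pscale s1 s2)" using vsp by (simp add: module_iff_vector_space)
  have subP: "module.subspace (pscale s1 s2) (A \<times> B)"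
    if "module.subspace s1 A" "module.subspace s2 B" for A B
    using that unfolding module.subspace_def[OF mp] module.subspace_def[OF l1.m] module.subspace_def[OF l2.m]
    by (auto simp: pscale_def zero_prod_def)
  let ?P = "H1 \<times> H2" and ?s = "pscale s1 s2" and ?b = "pbr b1 b2"
  have c1: "\<forall>x\<in>?P. \<forall>y\<in>?P. ?b x y \<in> ?P"
    by (auto simp: pbr_def l1.br_cl l2.br_cl)
  have c2: "\<forall>x\<in>?P. \<forall>y\<in>?P. \<forall>z\<in>?P. ?b (x + y) z = ?b x z + ?b y z \<and> ?b x (y + z) = ?b x y + ?b x z"
    by (auto simp: pbr_def l1.br_addL l2.br_addL l1.br_addR l2.br_addR)
  have c3: "\<forall>c. \<forall>x\<in>?P. \<forall>y\<in>?P. ?b (?s c x) y = ?s c (?b x y) \<and> ?b x (?s c y) = ?s c (?b x y)"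
    by (auto simp: pbr_def pscale_def l1.br_scL l2.br_scL l1.br_scR l2.br_scR)
  have c4: "\<forall>x\<in>?P. ?b x x = 0"
    by (auto simp: pbr_def l1.br_alt l2.br_alt zero_prod_def)
  have c5: "\<forall>x\<in>?P. \<forall>y\<in>?P. \<forall>z\<in>?P. ?b x (?b y z) + ?b y (?b z x) + ?b z (?b x y) = 0"
    by (auto simp: pbr_def l1.jacobi l2.jacobi zero_prod_def)
  have la: "lie_algebra ?s ?P ?b"
    unfolding lie_algebra_def using vsp subP[OF l1.sub l2.sub] c1 c2 c3 c4 c5 by blast
  define i1 where "i1 = (\<lambda>x::'a. (x, 0::'b))"
  define i2 where "i2 = (\<lambda>y::'b. (0::'a, y))"
  have SI1: "module.span ?s (i1 ` S) = i1 ` module.span s1 S" for S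
    by (rule span_image_lin[OF l1.m mp module.subspace_UNIV[OF l1.m] subset_UNIV])
       (auto simp: pscale_def i1_def)
  have SI2: "module.span ?s (i2 ` S) = i2 ` module.span s2 S" for S
    by (rule span_image_lin[OF l2.m mp module.subspace_UNIV[OF l2.m] subset_UNIV])
       (auto simp: pscale_def i2_def)
  obtain B1 where B1: "finite B1" "B1 \<subseteq> H1" "module.span s1 B1 = H1" using A by (auto simp: fd_lie_algebra_def)
  obtain B2 where B2: "finite B2" "B2 \<subseteq> H2" "module.span s2 B2 = H2" using B by (auto simp: fd_lie_algebra_def)
  let ?BB = "i1 ` B1 \<union> i2 ` B2"
  have BBsub: "?BB \<subseteq> ?P" using B1 B2 l1.zero_in l2.zero_in by (auto simp: i1_def i2_def)
  have spBB: "module.span ?s ?BB = ?P"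
  proof
    show "module.span ?s ?BB \<subseteq> ?P" by (rule module.span_minimal[OF mp BBsub subP[OF l1.sub l2.sub]])
    show "?P \<subseteq> module.span ?s ?BB"
    proof
      fix p assume "p \<in> ?P"
      then obtain x y where xy: "p = (x, y)" "x \<in> H1" "y \<in> H2" by blast
      have "i1 x \<in> module.span ?s (i1 ` B1)" using SI1[of B1] B1(3) xy by simp
      moreover have "module.span ?s (i1 ` B1) \<subseteq> module.span ?s ?BB" by (rule module.span_mono[OF mp]) blast
      ultimately have 1: "i1 x \<in> module.span ?s ?BB" by blast
      have "i2 y \<in> module.span ?s (i2 ` B2)" using SI2[of B2] B2(3) xy by simp
      moreover have "module.span ?s (i2 ` B2) \<subseteq> module.span ?s ?BB" by (rule module.span_mono[OF mp]) blast
      ultimately have 2: "i2 y \<in> module.span ?s ?BB" by blast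
      have "p = i1 x + i2 y" using xy by (simp add: i1_def i2_def)
      then show "p \<in> module.span ?s ?BB" using module.span_add[OF mp 1 2] by simp
    qed
  qed
  have fd: "fd_lie_algebra ?s ?P ?b"
  proof -
    have "finite ?BB" using B1(1) B2(1) by simp
    then show ?thesis unfolding fd_lie_algebra_def using la BBsub spBB by blast
  qed
  let ?S1 = "{b1 x y | x y. x \<in> H1 \<and> y \<in> H1}" and ?S2 = "{b2 x y | x y. x \<in> H2 \<and> y \<in> H2}"
  let ?S = "{?b x y | x y. x \<in> ?P \<and> y \<in> ?P}"
  have "module.span ?s ?S = module.span s1 ?S1 \<times> module.span s2 ?S2"
  proof
    show "module.span ?s ?S \<subseteq> module.span s1 ?S1 \<times> module.span s2 ?S2"
    proof (rule module.span_minimal[OF mp _ subP[OF module.subspace_span[OF l1.m] module.subspace_span[OF l2.m]]])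
      show "?S \<subseteq> module.span s1 ?S1 \<times> module.span s2 ?S2"
      proof
        fix w assume "w \<in> ?S"
        then obtain x y where w: "x \<in> ?P" "y \<in> ?P" "w = ?b x y" by blast
        have "fst x \<in> H1" "fst y \<in> H1" "snd x \<in> H2" "snd y \<in> H2" using w by auto
        then have "b1 (fst x) (fst y) \<in> ?S1" "b2 (snd x) (snd y) \<in> ?S2" by blast+
        then show "w \<in> module.span s1 ?S1 \<times> module.span s2 ?S2"
          using w module.span_base[OF l1.m] module.span_base[OF l2.m] by (auto simp: pbr_def)
      qed
    qed
    show "module.span s1 ?S1 \<times> module.span s2 ?S2 \<subseteq> module.span ?s ?S"
    proof
      fix p assume "p \<in> module.span s1 ?S1 \<times> module.span s2 ?S2"
      then obtain x y where xy: "p = (x, y)" "x \<in> module.span s1 ?S1" "y \<in> module.span s2 ?S2" by blast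
      have s1: "i1 ` ?S1 \<subseteq> ?S"
      proof
        fix w assume "w \<in> i1 ` ?S1"
        then obtain u v where uv: "u \<in> H1" "v \<in> H1" "w = i1 (b1 u v)" by blast
        then have "w = ?b (u, 0) (v, 0)" using l2.br_0L[OF l2.zero_in] by (simp add: i1_def pbr_def)
        then show "w \<in> ?S" using uv l2.zero_in by blast
      qed
      have s2: "i2 ` ?S2 \<subseteq> ?S"
      proof
        fix w assume "w \<in> i2 ` ?S2"
        then obtain u v where uv: "u \<in> H2" "v \<in> H2" "w = i2 (b2 u v)" by blast
        then have "w = ?b (0, u) (0, v)" using l1.br_0L[OF l1.zero_in] by (simp add: i2_def pbr_def)
        then show "w \<in> ?S" using uv l1.zero_in by blast
      qed
      have "i1 x \<in> module.span ?s (i1 ` ?S1)" using SI1[of ?S1] xy by simp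
      then have 1: "i1 x \<in> module.span ?s ?S" using module.span_mono[OF mp s1] by blast
      have "i2 y \<in> module.span ?s (i2 ` ?S2)" using SI2[of ?S2] xy by simp
      then have 2: "i2 y \<in> module.span ?s ?S" using module.span_mono[OF mp s2] by blast
      have "p = i1 x + i2 y" using xy by (simp add: i1_def i2_def)
      then show "p \<in> module.span ?s ?S" using module.span_add[OF mp 1 2] by simp
    qed
  qed
  then show ?thesis using fd unfolding derived_def by blast
qed



lemma ideal_facts:
  assumes L: "lie_algebra sc L br" and I: "lie_ideal sc L br I"
  shows "I \<subseteq> L" "\<And>x y. x \<in> I \<Longrightarrow> y \<in> I \<Longrightarrow> x + y \<in> I" "\<And>x y. x \<in> I \<Longrightarrow> y \<in> I \<Longrightarrow> x - y \<in> I"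
    "\<And>x. x \<in> I \<Longrightarrow> - x \<in> I" "\<And>x c. x \<in> I \<Longrightarrow> sc c x \<in> I" "0 \<in> I"
    "\<And>x y. x \<in> L \<Longrightarrow> y \<in> I \<Longrightarrow> br x y \<in> I"
    "module.subspace sc I"
proof -
  have m: "module sc" using L by (rule lie_mod)
  have sub: "module.subspace sc I" using I by (simp add: lie_ideal_def)
  show "module.subspace sc I" by (rule sub)
  show "I \<subseteq> L" using I by (simp add: lie_ideal_def)
  show "\<And>x y. x \<in> I \<Longrightarrow> y \<in> I \<Longrightarrow> x + y \<in> I" "\<And>x c. x \<in> I \<Longrightarrow> sc c x \<in> I" "0 \<in> I"
    using sub m by (auto simp: module.subspace_def)
  show "\<And>x y. x \<in> I \<Longrightarrow> y \<in> I \<Longrightarrow> x - y \<in> I" using module.subspace_diff[OF m sub] by blast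
  show "\<And>x. x \<in> I \<Longrightarrow> - x \<in> I" using module.subspace_neg[OF m sub] by blast
  show "\<And>x y. x \<in> L \<Longrightarrow> y \<in> I \<Longrightarrow> br x y \<in> I" using I by (simp add: lie_ideal_def)
qed

lemma ideals_commute:
  assumes L: "lie_algebra sc L br" and I1: "lie_ideal sc L br L1" and I2: "lie_ideal sc L br L2"
    and disj: "L1 \<inter> L2 = {0}" and x: "x \<in> L1" and y: "y \<in> L2"
  shows "br x y = 0"
proof -
  interpret l: lie sc L br by unfold_locales (rule L)
  note i1 = ideal_facts[OF L I1] and i2 = ideal_facts[OF L I2]
  have xL: "x \<in> L" and yL: "y \<in> L" using x y i1(1) i2(1) by auto
  have "br x y \<in> L2" using i2(7)[OF xL y] .
  moreover have "br y x \<in> L1" using i1(7)[OF yL x] .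
  then have "br x y \<in> L1" using l.antisym[OF xL yL] i1(4) by simp
  ultimately show ?thesis using disj by blast
qed

lemma part1:
  fixes sc :: "'k::field \<Rightarrow> 'v::ab_group_add \<Rightarrow> 'v"
    and sc1 :: "'k \<Rightarrow> 'a::ab_group_add \<Rightarrow> 'a" and sc2 :: "'k \<Rightarrow> 'b::ab_group_add \<Rightarrow> 'b"
  assumes L: "fd_lie_algebra sc L br"
    and I1: "lie_ideal sc L br L1" and I2: "lie_ideal sc L br L2"
    and disj: "L1 \<inter> L2 = {0}"
    and sum: "{a + b | a b. a \<in> L1 \<and> b \<in> L2} = L"
    and H1: "fd_lie_algebra sc1 H1 br1" and iso1: "lie_iso sc1 (derived sc1 H1 br1) br1 sc L1 br"
    and H2: "fd_lie_algebra sc2 H2 br2" and iso2: "lie_iso sc2 (derived sc2 H2 br2) br2 sc L2 br"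
  shows "\<exists>(H :: (nat \<Rightarrow> 'k) set) brH.
            fd_lie_algebra seq_scale H brH \<and> lie_iso seq_scale (derived seq_scale H brH) brH sc L br"
proof -
  have la: "lie_algebra sc L br" using L by (simp add: fd_lie_algebra_def)
  interpret l: lie sc L br by unfold_locales (rule la)
  interpret mv: module sc by (rule l.m)
  note i1 = ideal_facts[OF la I1] and i2 = ideal_facts[OF la I2]
  have comm: "br x y = 0" if "x \<in> L1" "y \<in> L2" for x y
    using ideals_commute[OF la I1 I2 disj that] .
  have comm2: "br y x = 0" if "x \<in> L1" "y \<in> L2" for x y
    using ideals_commute[OF la I2 I1 _ that(2) that(1)] disj by blast
  let ?D1 = "derived sc1 H1 br1" and ?D2 = "derived sc2 H2 br2"
  obtain f1 where f1: "bij_betw f1 ?D1 L1"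
    "\<forall>x\<in>?D1. \<forall>y\<in>?D1. f1 (x + y) = f1 x + f1 y \<and> f1 (br1 x y) = br (f1 x) (f1 y)"
    "\<forall>c. \<forall>x\<in>?D1. f1 (sc1 c x) = sc c (f1 x)" using iso1 unfolding lie_iso_def by blast
  obtain f2 where f2: "bij_betw f2 ?D2 L2"
    "\<forall>x\<in>?D2. \<forall>y\<in>?D2. f2 (x + y) = f2 x + f2 y \<and> f2 (br2 x y) = br (f2 x) (f2 y)"
    "\<forall>c. \<forall>x\<in>?D2. f2 (sc2 c x) = sc c (f2 x)" using iso2 unfolding lie_iso_def by blast
  have f1i: "f1 a \<in> L1" if "a \<in> ?D1" for a using f1(1) that by (simp add: bij_betw_apply)
  have f2i: "f2 a \<in> L2" if "a \<in> ?D2" for a using f2(1) that by (simp add: bij_betw_apply)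
  have f1L: "f1 a \<in> L" if "a \<in> ?D1" for a using f1i[OF that] i1(1) by blast
  have f2L: "f2 a \<in> L" if "a \<in> ?D2" for a using f2i[OF that] i2(1) by blast
  define F where "F p = f1 (fst p) + f2 (snd p)" for p
  have inj: "inj_on F (?D1 \<times> ?D2)"
  proof (rule inj_onI)
    fix p q assume pq: "p \<in> ?D1 \<times> ?D2" "q \<in> ?D1 \<times> ?D2" "F p = F q"
    have m: "fst p \<in> ?D1" "fst q \<in> ?D1" "snd p \<in> ?D2" "snd q \<in> ?D2" using pq(1,2) by auto
    have "f1 (fst p) + f2 (snd p) = f1 (fst q) + f2 (snd q)" using pq(3) unfolding F_def .
    then have e: "f1 (fst p) - f1 (fst q) = f2 (snd q) - f2 (snd p)"
      by (metis add_diff_cancel_left' add_diff_cancel_right' diff_diff_eq2 diff_add_cancel)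
    have "f2 (snd q) - f2 (snd p) \<in> L1" using i1(3)[OF f1i[OF m(1)] f1i[OF m(2)]] e by simp
    moreover have "f2 (snd q) - f2 (snd p) \<in> L2" using i2(3)[OF f2i[OF m(4)] f2i[OF m(3)]] .
    ultimately have "f2 (snd q) - f2 (snd p) \<in> L1 \<inter> L2" by blast
    then have z: "f2 (snd q) - f2 (snd p) = 0" using disj by blast
    then have "f1 (fst p) - f1 (fst q) = 0" using e by simp
    with z have "f1 (fst p) = f1 (fst q)" "f2 (snd p) = f2 (snd q)" by simp_all
    moreover have "inj_on f1 ?D1" "inj_on f2 ?D2" using f1(1) f2(1) by (simp_all add: bij_betw_def)
    ultimately have "fst p = fst q" "snd p = snd q" using m by (meson inj_onD)+
    then show "p = q" by (simp add: prod_eq_iff)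
  qed
  have img: "F ` (?D1 \<times> ?D2) = L"
  proof
    show "F ` (?D1 \<times> ?D2) \<subseteq> L" using f1L f2L l.add_cl by (auto simp: F_def)
    show "L \<subseteq> F ` (?D1 \<times> ?D2)"
    proof
      fix l assume "l \<in> L"
      then obtain a b where ab: "a \<in> L1" "b \<in> L2" "l = a + b" using sum by blast
      obtain a' where a': "a' \<in> ?D1" "a = f1 a'" using f1(1) ab(1) unfolding bij_betw_def by blast
      obtain b' where b': "b' \<in> ?D2" "b = f2 b'" using f2(1) ab(2) unfolding bij_betw_def by blast
      have "l = F (a', b')" using ab a' b' by (simp add: F_def)
      then show "l \<in> F ` (?D1 \<times> ?D2)" using a' b' by blast
    qed
  qed
  have iso: "lie_iso (pscale sc1 sc2) (?D1 \<times> ?D2) (pbr br1 br2) sc L br"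
    unfolding lie_iso_def
  proof (intro exI[of _ F] conjI ballI allI)
    show "bij_betw F (?D1 \<times> ?D2) L" using inj img by (simp add: bij_betw_def)
  next
    fix p q assume pq: "p \<in> ?D1 \<times> ?D2" "q \<in> ?D1 \<times> ?D2"
    obtain a b where p: "p = (a, b)" "a \<in> ?D1" "b \<in> ?D2" using pq(1) by blast
    obtain a' b' where q: "q = (a', b')" "a' \<in> ?D1" "b' \<in> ?D2" using pq(2) by blast
    show "F (p + q) = F p + F q" using p q f1(2) f2(2) by (simp add: F_def algebra_simps)
    have "F (pbr br1 br2 p q) = br (f1 a) (f1 a') + br (f2 b) (f2 b')"
      using p q f1(2) f2(2) by (simp add: F_def pbr_def)
    also have "\<dots> = br (f1 a) (f1 a') + br (f1 a) (f2 b') + (br (f2 b) (f1 a') + br (f2 b) (f2 b'))"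
      using comm[OF f1i[OF p(2)] f2i[OF q(3)]] comm2[OF f1i[OF q(2)] f2i[OF p(3)]] by simp
    also have "\<dots> = br (f1 a) (f1 a' + f2 b') + br (f2 b) (f1 a' + f2 b')"
      using l.br_addR[OF f1L[OF p(2)] f1L[OF q(2)] f2L[OF q(3)]]
        l.br_addR[OF f2L[OF p(3)] f1L[OF q(2)] f2L[OF q(3)]] by simp
    also have "\<dots> = br (F p) (F q)"
      using l.br_addL[OF f1L[OF p(2)] f2L[OF p(3)] l.add_cl[OF f1L[OF q(2)] f2L[OF q(3)]]] p q by (simp add: F_def)
    finally show "F (pbr br1 br2 p q) = br (F p) (F q)" .
  next
    fix c p assume "p \<in> ?D1 \<times> ?D2"
    then obtain a b where p: "p = (a, b)" "a \<in> ?D1" "b \<in> ?D2" by blast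
    show "F (pscale sc1 sc2 c p) = sc c (F p)"
      using p f1(3) f2(3) by (simp add: F_def pscale_def mv.scale_right_distrib)
  qed
  have PL: "fd_lie_algebra (pscale sc1 sc2) (H1 \<times> H2) (pbr br1 br2) \<and>
         derived (pscale sc1 sc2) (H1 \<times> H2) (pbr br1 br2) = ?D1 \<times> ?D2"
    by (rule prod_lie[OF H1 H2])
  obtain H :: "(nat \<Rightarrow> 'k) set" and brH where H: "fd_lie_algebra seq_scale H brH"
    "lie_iso seq_scale (derived seq_scale H brH) brH (pscale sc1 sc2) (?D1 \<times> ?D2) (pbr br1 br2)"
    using embed[of "pscale sc1 sc2" "H1 \<times> H2" "pbr br1 br2"] PL by auto
  show ?thesis using H iso_trans[OF H(2) iso] by blast
qed



lemma vs_fun: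
  assumes "vector_space sc"
  shows "vector_space (\<lambda>c (\<phi>::'x \<Rightarrow> 'v::ab_group_add). \<lambda>x. sc c (\<phi> x))"
proof -
  interpret a: vector_space sc by fact
  show ?thesis
    by unfold_locales (auto simp: fun_eq_iff a.scale_right_distrib a.scale_left_distrib)
qed

lemma part2:
  fixes sc :: "'k::field \<Rightarrow> 'v::ab_group_add \<Rightarrow> 'v" and scH :: "'k \<Rightarrow> 'h::ab_group_add \<Rightarrow> 'h"
  assumes L: "fd_lie_algebra sc L br"
    and I1: "lie_ideal sc L br L1" and I2: "lie_ideal sc L br L2"
    and disj: "L1 \<inter> L2 = {0}"
    and sum: "{a + b | a b. a \<in> L1 \<and> b \<in> L2} = L"
    and H: "fd_lie_algebra scH H brH" and iso: "lie_iso scH (derived scH H brH) brH sc L br"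
    and Z: "lie_center L1 br = {0}"
  shows "\<exists>(K :: (nat \<Rightarrow> 'k) set) brK.
            fd_lie_algebra seq_scale K brK \<and> lie_iso seq_scale (derived seq_scale K brK) brK sc L1 br"
proof -
  have la: "lie_algebra sc L br" using L by (simp add: fd_lie_algebra_def)
  have lh: "lie_algebra scH H brH" using H by (simp add: fd_lie_algebra_def)
  interpret l: lie sc L br by unfold_locales (rule la)
  interpret h: lie scH H brH by unfold_locales (rule lh)
  interpret mv: module sc by (rule l.m)
  note i1 = ideal_facts[OF la I1] and i2 = ideal_facts[OF la I2]
  have comm: "br x y = 0" if "x \<in> L1" "y \<in> L2" for x y
    using ideals_commute[OF la I1 I2 disj that] .
  have comm2: "br y x = 0" if "x \<in> L1" "y \<in> L2" for x y
    using ideals_commute[OF la I2 I1 _ that(2) that(1)] disj by blast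
  let ?D = "derived scH H brH"
  note Dc = derived_closed[OF lh]
  obtain f where f: "bij_betw f ?D L"
    "\<forall>x\<in>?D. \<forall>y\<in>?D. f (x + y) = f x + f y \<and> f (brH x y) = br (f x) (f y)"
    "\<forall>c. \<forall>x\<in>?D. f (scH c x) = sc c (f x)" using iso unfolding lie_iso_def by blast
  define g where "g = inv_into ?D f"
  have gD: "g l \<in> ?D" and fg: "f (g l) = l" if "l \<in> L" for l
  proof -
    have "l \<in> f ` ?D" using f(1) that by (simp add: bij_betw_def)
    then show "g l \<in> ?D" "f (g l) = l" unfolding g_def by (auto intro: inv_into_into f_inv_into_f)
  qed
  have gf: "g (f d) = d" if "d \<in> ?D" for d
    using f(1) that unfolding g_def by (simp add: bij_betw_inv_into_left)
  have fD: "f d \<in> L" if "d \<in> ?D" for d using f(1) that by (simp add: bij_betw_apply)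
  have DH: "d \<in> H" if "d \<in> ?D" for d using Dc(1) that by (rule subsetD)
  have brD: "brH a b \<in> ?D" if "a \<in> H" "b \<in> H" for a b
  proof -
    have "brH a b \<in> {brH x y | x y. x \<in> H \<and> y \<in> H}" using that by blast
    then show ?thesis unfolding derived_def by (rule module.span_base[OF h.m])
  qed
  have fadd: "f (d + e) = f d + f e" if "d \<in> ?D" "e \<in> ?D" for d e using f(2) that by blast
  have fbr: "f (brH d e) = br (f d) (f e)" if "d \<in> ?D" "e \<in> ?D" for d e using f(2) that by blast
  have fsc: "f (scH c d) = sc c (f d)" if "d \<in> ?D" for d c using f(3) that by blast
  have Dadd: "d + e \<in> ?D" if "d \<in> ?D" "e \<in> ?D" for d e using Dc(2) that by blast
  have Ddiff: "d - e \<in> ?D" if "d \<in> ?D" "e \<in> ?D" for d e using module.subspace_diff[OF h.m Dc(4)] that by blast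
  have fdiff: "f (d - e) = f d - f e" if "d \<in> ?D" "e \<in> ?D" for d e
  proof -
    have "f d = f ((d - e) + e)" by simp
    also have "\<dots> = f (d - e) + f e" using fadd[OF Ddiff[OF that] that(2)] .
    finally show ?thesis by simp
  qed
  have gadd: "g (l + l') = g l + g l'" if "l \<in> L" "l' \<in> L" for l l'
  proof -
    have "l + l' = f (g l + g l')" using fadd[OF gD gD] fg that by simp
    then show ?thesis using gf[OF Dadd[OF gD[OF that(1)] gD[OF that(2)]]] by simp
  qed
  have gbr: "g (br l l') = brH (g l) (g l')" if "l \<in> L" "l' \<in> L" for l l'
  proof -
    have "br l l' = f (brH (g l) (g l'))" using fbr[OF gD gD] fg that by simp
    then show ?thesis using gf[OF brD[OF DH[OF gD[OF that(1)]] DH[OF gD[OF that(2)]]]] by simp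
  qed
  have g0: "g 0 = 0" using gadd[OF l.zero_in l.zero_in] by simp

  define p1 where "p1 l = (THE a. a \<in> L1 \<and> l - a \<in> L2)" for l
  have p1_eq: "p1 (a + b) = a" if "a \<in> L1" "b \<in> L2" for a b
    unfolding p1_def
  proof (rule the_equality)
    show "a \<in> L1 \<and> a + b - a \<in> L2" using that by simp
    fix a' assume a': "a' \<in> L1 \<and> a + b - a' \<in> L2"
    have "a - a' = (a + b - a') - b" by (simp add: algebra_simps)
    then have "a - a' \<in> L2" using i2(3)[of "a + b - a'" b] a' that by simp
    moreover have "a - a' \<in> L1" using i1(3) a' that by simp
    ultimately have "a - a' = 0" using disj by blast
    then show "a' = a" by simp
  qed
  have p1_dec: "p1 l \<in> L1" "l - p1 l \<in> L2" if lL: "l \<in> L" for l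
  proof -
    have "l \<in> {a + b | a b. a \<in> L1 \<and> b \<in> L2}" using sum lL by simp
    then obtain a b where ab: "a \<in> L1" "b \<in> L2" "l = a + b" by blast
    then show "p1 l \<in> L1" "l - p1 l \<in> L2" using p1_eq by auto
  qed
  have p1L: "p1 l \<in> L" if "l \<in> L" for l using p1_dec[OF that] i1(1) by blast
  have p1_add: "p1 (l + l') = p1 l + p1 l'" if "l \<in> L" "l' \<in> L" for l l'
  proof -
    have "l + l' = (p1 l + p1 l') + ((l - p1 l) + (l' - p1 l'))" by (simp add: algebra_simps)
    then show ?thesis using p1_eq[OF i1(2)[OF p1_dec(1)[OF that(1)] p1_dec(1)[OF that(2)]]
        i2(2)[OF p1_dec(2)[OF that(1)] p1_dec(2)[OF that(2)]]] by simp
  qed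
  have p1_sc: "p1 (sc c l) = sc c (p1 l)" if "l \<in> L" for l c
  proof -
    have "sc c l = sc c (p1 l) + sc c (l - p1 l)" by (simp add: mv.scale_right_diff_distrib)
    then show ?thesis using p1_eq[OF i1(5)[OF p1_dec(1)[OF that]] i2(5)[OF p1_dec(2)[OF that]]] by simp
  qed
  have p1_L1: "p1 a = a" if "a \<in> L1" for a using p1_eq[OF that i2(6)] by simp
  have p1_L2: "p1 b = 0" if "b \<in> L2" for b using p1_eq[OF i1(6) that] by simp
  have p1_diff: "p1 (l - l') = p1 l - p1 l'" if "l \<in> L" "l' \<in> L" for l l'
  proof -
    have "p1 l = p1 ((l - l') + l')" by simp
    also have "\<dots> = p1 (l - l') + p1 l'" using p1_add[OF l.diff_cl[OF that] that(2)] .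
    finally show ?thesis by simp
  qed

  define T where "T h l = f (brH h (g l))" for h l
  have TL: "T h l \<in> L" if "h \<in> H" "l \<in> L" for h l
    unfolding T_def using fD[OF brD[OF that(1) DH[OF gD[OF that(2)]]]] .
  have Tadd: "T h (l + l') = T h l + T h l'" if "h \<in> H" "l \<in> L" "l' \<in> L" for h l l'
  proof -
    have "T h (l + l') = f (brH h (g l) + brH h (g l'))"
      unfolding T_def gadd[OF that(2,3)] using h.br_addR[OF that(1) DH[OF gD[OF that(2)]] DH[OF gD[OF that(3)]]] by simp
    also have "\<dots> = T h l + T h l'" unfolding T_def
      using fadd[OF brD[OF that(1) DH[OF gD[OF that(2)]]] brD[OF that(1) DH[OF gD[OF that(3)]]]] .
    finally show ?thesis .
  qed
  have T0: "T h 0 = 0" if "h \<in> H" for h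
    using Tadd[OF that l.zero_in l.zero_in] by simp
  have Taddh: "T (a + b) l = T a l + T b l" if "a \<in> H" "b \<in> H" "l \<in> L" for a b l
    unfolding T_def using h.br_addL[OF that(1,2) DH[OF gD[OF that(3)]]]
      fadd[OF brD[OF that(1) DH[OF gD[OF that(3)]]] brD[OF that(2) DH[OF gD[OF that(3)]]]] by simp
  have Tsch: "T (scH c a) l = sc c (T a l)" if "a \<in> H" "l \<in> L" for a l c
    unfolding T_def using h.br_scL[OF that(1) DH[OF gD[OF that(2)]]]
      fsc[OF brD[OF that(1) DH[OF gD[OF that(2)]]]] by simp
  have Tder: "T h (br x y) = br (T h x) y + br x (T h y)" if "h \<in> H" "x \<in> L" "y \<in> L" for h x y
  proof -
    have gx: "g x \<in> H" "g x \<in> ?D" and gy: "g y \<in> H" "g y \<in> ?D" using DH gD that by auto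
    have "T h (br x y) = f (brH h (brH (g x) (g y)))" unfolding T_def gbr[OF that(2,3)] ..
    also have "\<dots> = f (brH (brH h (g x)) (g y) + brH (g x) (brH h (g y)))"
      using h.jac2[OF that(1) gx(1) gy(1)] by simp
    also have "\<dots> = f (brH (brH h (g x)) (g y)) + f (brH (g x) (brH h (g y)))"
      using fadd[OF brD[OF DH[OF brD[OF that(1) gx(1)]] gy(1)] brD[OF gx(1) DH[OF brD[OF that(1) gy(1)]]]] .
    also have "\<dots> = br (T h x) y + br x (T h y)"
      unfolding T_def using fbr[OF brD[OF that(1) gx(1)] gy(2)] fbr[OF gx(2) brD[OF that(1) gy(1)]] fg that by simp
    finally show ?thesis .
  qed
  have Tcomm: "T (brH a b) l = T a (T b l) - T b (T a l)" if "a \<in> H" "b \<in> H" "l \<in> L" for a b l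
  proof -
    have gl: "g l \<in> H" using DH gD that by auto
    have "T (brH a b) l = f (brH a (brH b (g l)) - brH b (brH a (g l)))"
      unfolding T_def using h.jac2[OF that(1,2) gl] by (simp add: algebra_simps)
    also have "\<dots> = f (brH a (brH b (g l))) - f (brH b (brH a (g l)))"
      using fdiff[OF brD[OF that(1) DH[OF brD[OF that(2) gl]]] brD[OF that(2) DH[OF brD[OF that(1) gl]]]] .
    also have "\<dots> = T a (T b l) - T b (T a l)"
      unfolding T_def using gf[OF brD[OF that(2) gl]] gf[OF brD[OF that(1) gl]] by simp
    finally show ?thesis .
  qed
  have key: "p1 (T h z) = 0" if "h \<in> H" "z \<in> L2" for h z
  proof -
    have zL: "z \<in> L" using that i2(1) by blast
    let ?w = "T h z"
    have wL: "?w \<in> L" using TL[OF that(1) zL] .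
    have "p1 ?w \<in> lie_center L1 br"
      unfolding lie_center_def
    proof (intro CollectI conjI ballI)
      show "p1 ?w \<in> L1" using p1_dec[OF wL] by blast
      fix x assume x: "x \<in> L1"
      have xL: "x \<in> L" using x i1(1) by blast
      have "br (T h x) z + br x ?w = T h (br x z)" using Tder[OF that(1) xL zL] by simp
      also have "\<dots> = 0" using comm[OF x that(2)] T0[OF that(1)] by simp
      finally have s: "br x ?w = - br (T h x) z" by (simp add: eq_neg_iff_add_eq_0 add.commute)
      have "br (T h x) z \<in> L2" using i2(7)[OF TL[OF that(1) xL] that(2)] .
      then have "br x ?w \<in> L2" using s i2(4) by simp
      moreover have "br x ?w \<in> L1"
      proof -
        have "br ?w x \<in> L1" using i1(7)[OF wL x] .
        then show ?thesis using l.antisym[OF xL wL] i1(4) by simp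
      qed
      ultimately have z0: "br x ?w = 0" using disj by blast
      have "?w = p1 ?w + (?w - p1 ?w)" by simp
      then have "br x ?w = br x (p1 ?w) + br x (?w - p1 ?w)"
        using l.br_addR[OF xL p1L[OF wL] l.diff_cl[OF wL p1L[OF wL]]] by simp
      then have "br x (p1 ?w) = 0" using z0 comm[OF x p1_dec(2)[OF wL]] by simp
      then show "br (p1 ?w) x = 0" using l.antisym[OF p1L[OF wL] xL] by simp
    qed
    then show ?thesis using Z by blast
  qed
  define scK :: "'k \<Rightarrow> ('v \<Rightarrow> 'v) \<Rightarrow> ('v \<Rightarrow> 'v)" where "scK c \<phi> = (\<lambda>x. sc c (\<phi> x))" for c \<phi>
  define brK :: "('v \<Rightarrow> 'v) \<Rightarrow> ('v \<Rightarrow> 'v) \<Rightarrow> ('v \<Rightarrow> 'v)"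
    where "brK \<phi> \<chi> = (\<lambda>x. if x \<in> L1 then \<phi> (\<chi> x) - \<chi> (\<phi> x) else 0)" for \<phi> \<chi>
  define \<psi> where "\<psi> h = (\<lambda>x. if x \<in> L1 then p1 (T h x) else 0)" for h
  have vsK: "vector_space scK" unfolding scK_def[abs_def] by (rule vs_fun[OF l.vs])
  have L1L: "x \<in> L" if "x \<in> L1" for x using i1(1) that by blast
  have psi_add: "\<forall>a\<in>H. \<forall>b\<in>H. \<psi> (a + b) = \<psi> a + \<psi> b"
  proof (intro ballI)
    fix a b assume ab: "a \<in> H" "b \<in> H"
    show "\<psi> (a + b) = \<psi> a + \<psi> b"
    proof (rule ext)
      fix x show "\<psi> (a + b) x = (\<psi> a + \<psi> b) x"
        using Taddh[OF ab L1L] p1_add[OF TL[OF ab(1) L1L] TL[OF ab(2) L1L]] by (simp add: \<psi>_def)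
    qed
  qed
  have psi_sc: "\<forall>c. \<forall>a\<in>H. \<psi> (scH c a) = scK c (\<psi> a)"
  proof (intro ballI allI)
    fix c a assume a: "a \<in> H"
    show "\<psi> (scH c a) = scK c (\<psi> a)"
    proof (rule ext)
      fix x show "\<psi> (scH c a) x = scK c (\<psi> a) x"
        using Tsch[OF a L1L] p1_sc[OF TL[OF a L1L]] by (simp add: \<psi>_def scK_def)
    qed
  qed
  have red: "p1 (T a l) = p1 (T a (p1 l))" if "a \<in> H" "l \<in> L" for a l
  proof -
    have "l = p1 l + (l - p1 l)" by simp
    then have "T a l = T a (p1 l) + T a (l - p1 l)"
      using Tadd[OF that(1) p1L[OF that(2)] l.diff_cl[OF that(2) p1L[OF that(2)]]] by simp
    then have "p1 (T a l) = p1 (T a (p1 l)) + p1 (T a (l - p1 l))"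
      using p1_add[OF TL[OF that(1) p1L[OF that(2)]] TL[OF that(1) l.diff_cl[OF that(2) p1L[OF that(2)]]]] by simp
    then show ?thesis using key[OF that(1) p1_dec(2)[OF that(2)]] by simp
  qed
  have psi_br: "\<forall>a\<in>H. \<forall>b\<in>H. \<psi> (brH a b) = brK (\<psi> a) (\<psi> b)"
  proof (intro ballI)
    fix a b assume ab: "a \<in> H" "b \<in> H"
    show "\<psi> (brH a b) = brK (\<psi> a) (\<psi> b)"
    proof (rule ext)
      fix x show "\<psi> (brH a b) x = brK (\<psi> a) (\<psi> b) x"
      proof (cases "x \<in> L1")
        case True
        have xL: "x \<in> L" using L1L[OF True] .
        have "\<psi> (brH a b) x = p1 (T a (T b x) - T b (T a x))"
          using True Tcomm[OF ab xL] by (simp add: \<psi>_def)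
        also have "\<dots> = p1 (T a (T b x)) - p1 (T b (T a x))"
          using p1_diff[OF TL[OF ab(1) TL[OF ab(2) xL]] TL[OF ab(2) TL[OF ab(1) xL]]] .
        also have "\<dots> = p1 (T a (p1 (T b x))) - p1 (T b (p1 (T a x)))"
          using red[OF ab(1) TL[OF ab(2) xL]] red[OF ab(2) TL[OF ab(1) xL]] by simp
        also have "\<dots> = brK (\<psi> a) (\<psi> b) x"
          using True p1_dec(1)[OF TL[OF ab(1) xL]] p1_dec(1)[OF TL[OF ab(2) xL]]
          by (simp add: brK_def \<psi>_def)
        finally show ?thesis .
      next
        case False
        then show ?thesis by (simp add: brK_def \<psi>_def)
      qed
    qed
  qed
  have HI: "fd_lie_algebra scK (\<psi> ` H) brK \<and> derived scK (\<psi> ` H) brK = \<psi> ` ?D"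
    by (rule hom_image[OF H vsK psi_add psi_sc psi_br])
  define ad where "ad a = (\<lambda>x. if x \<in> L1 then br a x else 0)" for a
  have psiD: "\<psi> d = ad (p1 (f d))" if d: "d \<in> ?D" for d
  proof (rule ext)
    fix x show "\<psi> d x = ad (p1 (f d)) x"
    proof (cases "x \<in> L1")
      case True
      have xL: "x \<in> L" using L1L[OF True] .
      have fdL: "f d \<in> L" using fD[OF d] .
      have "T d x = br (f d) x" unfolding T_def using fbr[OF d gD[OF xL]] fg[OF xL] by simp
      also have "\<dots> = br (p1 (f d) + (f d - p1 (f d))) x" by simp
      also have "\<dots> = br (p1 (f d)) x + br (f d - p1 (f d)) x"
        using l.br_addL[OF p1L[OF fdL] l.diff_cl[OF fdL p1L[OF fdL]] xL] .
      also have "\<dots> = br (p1 (f d)) x" using comm2[OF True p1_dec(2)[OF fdL]] by simp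
      finally have "T d x = br (p1 (f d)) x" .
      moreover have "br (p1 (f d)) x \<in> L1" using i1(7)[OF p1L[OF fdL] True] .
      ultimately show ?thesis using True p1_L1 by (simp add: \<psi>_def ad_def)
    next
      case False
      then show ?thesis by (simp add: \<psi>_def ad_def)
    qed
  qed
  have psiDeq: "\<psi> ` ?D = ad ` L1"
  proof
    show "\<psi> ` ?D \<subseteq> ad ` L1"
    proof
      fix u assume "u \<in> \<psi> ` ?D"
      then obtain d where d: "d \<in> ?D" "u = \<psi> d" by blast
      then have "u = ad (p1 (f d))" using psiD by simp
      moreover have "p1 (f d) \<in> L1" using p1_dec(1)[OF fD[OF d(1)]] .
      ultimately show "u \<in> ad ` L1" by blast
    qed
    show "ad ` L1 \<subseteq> \<psi> ` ?D"
    proof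
      fix u assume "u \<in> ad ` L1"
      then obtain a where a: "a \<in> L1" "u = ad a" by blast
      have "\<psi> (g a) = ad (p1 (f (g a)))" using psiD[OF gD[OF L1L[OF a(1)]]] .
      also have "\<dots> = u" using fg[OF L1L[OF a(1)]] p1_L1[OF a(1)] a(2) by simp
      finally show "u \<in> \<psi> ` ?D" using gD[OF L1L[OF a(1)]] by (metis image_eqI)
    qed
  qed
  have adinj: "inj_on ad L1"
  proof (rule inj_onI)
    fix a b assume ab: "a \<in> L1" "b \<in> L1" "ad a = ad b"
    have "a - b \<in> lie_center L1 br"
      unfolding lie_center_def
    proof (intro CollectI conjI ballI)
      show "a - b \<in> L1" using i1(3) ab by simp
      fix x assume x: "x \<in> L1"
      have "br a x = br b x" using fun_cong[OF ab(3), of x] x by (simp add: ad_def)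
      then show "br (a - b) x = 0" using l.br_diffL[OF L1L[OF ab(1)] L1L[OF ab(2)] L1L[OF x]] by simp
    qed
    then show "a = b" using Z by simp
  qed
  have adiso: "lie_iso sc L1 br scK (ad ` L1) brK"
    unfolding lie_iso_def
  proof (intro exI[of _ ad] conjI ballI allI)
    show "bij_betw ad L1 (ad ` L1)" using adinj by (simp add: inj_on_imp_bij_betw)
  next
    fix a b assume ab: "a \<in> L1" "b \<in> L1"
    show "ad (a + b) = ad a + ad b"
    proof (rule ext)
      fix x show "ad (a + b) x = (ad a + ad b) x"
        using l.br_addL[OF L1L[OF ab(1)] L1L[OF ab(2)] L1L] by (simp add: ad_def)
    qed
    show "ad (br a b) = brK (ad a) (ad b)"
    proof (rule ext)
      fix x show "ad (br a b) x = brK (ad a) (ad b) x"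
      proof (cases "x \<in> L1")
        case True
        have "br (br a b) x = br a (br b x) - br b (br a x)"
          using l.jac2[OF L1L[OF ab(1)] L1L[OF ab(2)] L1L[OF True]] by (simp add: algebra_simps)
        moreover have "br b x \<in> L1" "br a x \<in> L1"
          using i1(7)[OF L1L[OF ab(2)] True] i1(7)[OF L1L[OF ab(1)] True] .
        ultimately show ?thesis using True by (simp add: ad_def brK_def)
      next
        case False
        then show ?thesis by (simp add: ad_def brK_def)
      qed
    qed
  next
    fix c a assume a: "a \<in> L1"
    show "ad (sc c a) = scK c (ad a)"
    proof (rule ext)
      fix x show "ad (sc c a) x = scK c (ad a) x"
        using l.br_scL[OF L1L[OF a] L1L] by (simp add: ad_def scK_def)
    qed
  qed
  have adiso2: "lie_iso scK (ad ` L1) brK sc L1 br"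
  proof -
    obtain F where F: "bij_betw F L1 (ad ` L1)"
      "\<forall>x\<in>L1. \<forall>y\<in>L1. F (x + y) = F x + F y \<and> F (br x y) = brK (F x) (F y)"
      "\<forall>c. \<forall>x\<in>L1. F (sc c x) = scK c (F x)" using adiso unfolding lie_iso_def by blast
    have cl1: "\<forall>x\<in>L1. \<forall>y\<in>L1. x + y \<in> L1 \<and> br x y \<in> L1" using i1(2) i1(7) L1L by blast
    have cl2: "\<forall>c. \<forall>x\<in>L1. sc c x \<in> L1" using i1(5) by blast
    show ?thesis by (rule inv_hom[OF F cl1 cl2])
  qed
  obtain K :: "(nat \<Rightarrow> 'k) set" and brK' where K: "fd_lie_algebra seq_scale K brK'"
    "lie_iso seq_scale (derived seq_scale K brK') brK' scK (derived scK (\<psi> ` H) brK) brK"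
    using embed[of scK "\<psi> ` H" brK] HI by blast
  have "lie_iso seq_scale (derived seq_scale K brK') brK' scK (ad ` L1) brK"
    using K(2) HI psiDeq by simp
  then show ?thesis using K(1) iso_trans[OF _ adiso2] by blast
qed


theorem lemma2p7:
  fixes sc :: "'k::field \<Rightarrow> 'v::ab_group_add \<Rightarrow> 'v"
    and L L1 L2 :: "'v set" and br :: "'v \<Rightarrow> 'v \<Rightarrow> 'v"
  assumes L: "fd_lie_algebra sc L br"
    and I1: "lie_ideal sc L br L1" and I2: "lie_ideal sc L br L2"
    and disj: "L1 \<inter> L2 = {0}"
    and sum: "{a + b | a b. a \<in> L1 \<and> b \<in> L2} = L"
  shows
    "(\<forall>(sc1 :: 'k \<Rightarrow> 'a::ab_group_add \<Rightarrow> 'a) H1 br1 (sc2 :: 'k \<Rightarrow> 'b::ab_group_add \<Rightarrow> 'b) H2 br2.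
        fd_lie_algebra sc1 H1 br1 \<and> lie_iso sc1 (derived sc1 H1 br1) br1 sc L1 br \<and>
        fd_lie_algebra sc2 H2 br2 \<and> lie_iso sc2 (derived sc2 H2 br2) br2 sc L2 br \<longrightarrow>
        (\<exists>(H :: (nat \<Rightarrow> 'k) set) brH.
            fd_lie_algebra seq_scale H brH \<and> lie_iso seq_scale (derived seq_scale H brH) brH sc L br))
     \<and>
     (\<forall>(scH :: 'k \<Rightarrow> 'h::ab_group_add \<Rightarrow> 'h) H brH.
        fd_lie_algebra scH H brH \<and> lie_iso scH (derived scH H brH) brH sc L br \<and>
        lie_center L1 br = {0} \<longrightarrow>
        (\<exists>(K :: (nat \<Rightarrow> 'k) set) brK.
            fd_lie_algebra seq_scale K brK \<and> lie_iso seq_scale (derived seq_scale K brK) brK sc L1 br))"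
proof (intro conjI allI impI)
  fix sc1 :: "'k \<Rightarrow> 'a::ab_group_add \<Rightarrow> 'a" and H1 br1 and sc2 :: "'k \<Rightarrow> 'b::ab_group_add \<Rightarrow> 'b" and H2 br2
  assume A: "fd_lie_algebra sc1 H1 br1 \<and> lie_iso sc1 (derived sc1 H1 br1) br1 sc L1 br \<and>
        fd_lie_algebra sc2 H2 br2 \<and> lie_iso sc2 (derived sc2 H2 br2) br2 sc L2 br"
  show "\<exists>(H :: (nat \<Rightarrow> 'k) set) brH.
            fd_lie_algebra seq_scale H brH \<and> lie_iso seq_scale (derived seq_scale H brH) brH sc L br"
    using part1[OF L I1 I2 disj sum] A by blast
next
  fix scH :: "'k \<Rightarrow> 'h::ab_group_add \<Rightarrow> 'h" and H brH
  assume A: "fd_lie_algebra scH H brH \<and> lie_iso scH (derived scH H brH) brH sc L br \<and>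
        lie_center L1 br = {0}"
  show "\<exists>(K :: (nat \<Rightarrow> 'k) set) brK.
            fd_lie_algebra seq_scale K brK \<and> lie_iso seq_scale (derived seq_scale K brK) brK sc L1 br"
    using part2[OF L I1 I2 disj sum] A by blast
qed

end
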